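(* Let $G$ be a proper interval graph with a proper vertex ordering $<$ and let $M$ be a uniquely restricted matching in $G$ starting with an edge $e'\in E(G)$. Let $e\in E(G)$ be such that $r(e)<l(e')$ and $\{e,e'\}$ is a uniquely restricted matching in $G$. Then $\{e\}\cup M$ is a uniquely restricted matching in $G$ starting with $e$.
   Context: Graphs are finite, simple, undirected. A proper interval graph is a graph with an interval representation (closed real intervals, adjacency iff intersection for distinct vertices) in which no interval strictly contains another. An ordering $<$ of $V(G)$ is a proper vertex ordering if for all $u<v<w$, $uw\in E(G)$ implies $uv,vw\in E(G)$. For an edge $e=uv$, $l(e)=\min_<\{u,v\}$ and $r(e)=\max_<\{u,v\}$. A matching is a set of pairwise vertex-disjoint edges; it is uniquely restricted if no other matching of $G$ matches exactly the same vertex set. For a uniquely restricted matching $M$ in such $G$, its edges can be labelled $e_1,\dots,e_{|M|}$ with $l(e_1)<r(e_1)<l(e_2)<r(e_2)<\cdots<l(e_{|M|})<r(e_{|M|})$, and $M$ is said to start with $e_1$ (the edge of $M$ with the $<$-smallest $l$-value). *)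

theory Defs
  imports Main "HOL-Library.Disjoint_Sets" Complex_Main
begin

definition simple_graph :: "'a set \<Rightarrow> 'a set set \<Rightarrow> bool" where
  "simple_graph V E \<longleftrightarrow> finite V \<and> (\<forall>e\<in>E. e \<subseteq> V \<and> card e = 2)"

definition proper_interval_graph :: "'a set \<Rightarrow> 'a set set \<Rightarrow> bool" where
  "proper_interval_graph V E \<longleftrightarrow>
     (\<exists>a b :: 'a \<Rightarrow> real.
        (\<forall>v\<in>V. a v \<le> b v) \<and>
        (\<forall>u\<in>V. \<forall>v\<in>V. u \<noteq> v \<longrightarrow>
            ({u, v} \<in> E \<longleftrightarrow> {a u..b u} \<inter> {a v..b v} \<noteq> {})) \<and>
        (\<forall>u\<in>V. \<forall>v\<in>V. \<not> ({a u..b u} \<subset> {a v..b v})))"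

definition strict_linear_order_on :: "'a set \<Rightarrow> ('a \<Rightarrow> 'a \<Rightarrow> bool) \<Rightarrow> bool" where
  "strict_linear_order_on V lt \<longleftrightarrow>
     (\<forall>x\<in>V. \<not> lt x x) \<and>
     (\<forall>x\<in>V. \<forall>y\<in>V. \<forall>z\<in>V. lt x y \<longrightarrow> lt y z \<longrightarrow> lt x z) \<and>
     (\<forall>x\<in>V. \<forall>y\<in>V. x \<noteq> y \<longrightarrow> lt x y \<or> lt y x)"

definition proper_vertex_ordering :: "'a set \<Rightarrow> 'a set set \<Rightarrow> ('a \<Rightarrow> 'a \<Rightarrow> bool) \<Rightarrow> bool" where
  "proper_vertex_ordering V E lt \<longleftrightarrow>
     strict_linear_order_on V lt \<and>
     (\<forall>u\<in>V. \<forall>v\<in>V. \<forall>w\<in>V. lt u v \<longrightarrow> lt v w \<longrightarrow> {u, w} \<in> E \<longrightarrow>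
         {u, v} \<in> E \<and> {v, w} \<in> E)"

definition lv :: "('a \<Rightarrow> 'a \<Rightarrow> bool) \<Rightarrow> 'a set \<Rightarrow> 'a" where
  "lv lt e = (THE u. u \<in> e \<and> (\<forall>w\<in>e. w \<noteq> u \<longrightarrow> lt u w))"

definition rv :: "('a \<Rightarrow> 'a \<Rightarrow> bool) \<Rightarrow> 'a set \<Rightarrow> 'a" where
  "rv lt e = (THE u. u \<in> e \<and> (\<forall>w\<in>e. w \<noteq> u \<longrightarrow> lt w u))"

definition matching :: "'a set set \<Rightarrow> 'a set set \<Rightarrow> bool" where
  "matching E M \<longleftrightarrow> M \<subseteq> E \<and> (\<forall>e\<in>M. \<forall>f\<in>M. e \<noteq> f \<longrightarrow> e \<inter> f = {})"

definition uniquely_restricted :: "'a set set \<Rightarrow> 'a set set \<Rightarrow> bool" where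
  "uniquely_restricted E M \<longleftrightarrow> matching E M \<and>
     (\<forall>M'. matching E M' \<and> \<Union>M' = \<Union>M \<longrightarrow> M' = M)"

definition starts_with :: "('a \<Rightarrow> 'a \<Rightarrow> bool) \<Rightarrow> 'a set set \<Rightarrow> 'a set \<Rightarrow> bool" where
  "starts_with lt M e \<longleftrightarrow> e \<in> M \<and> (\<forall>f\<in>M. f \<noteq> e \<longrightarrow> lt (lv lt e) (lv lt f))"

end

theory Submission
  imports Defs
begin

lemma lv_rv_pair:
  assumes "strict_linear_order_on V lt" "p \<in> V" "q \<in> V" "lt p q"
  shows "lv lt {p,q} = p \<and> rv lt {p,q} = q"
proof -
  have asym: "\<not> lt q p"
    using assms unfolding strict_linear_order_on_def by blast
  have pq: "p \<noteq> q" using assms unfolding strict_linear_order_on_def by blast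
  have "lv lt {p,q} = p"
    unfolding lv_def
    by (rule the_equality) (use assms asym pq in auto)
  moreover have "rv lt {p,q} = q"
    unfolding rv_def
    by (rule the_equality) (use assms asym pq in auto)
  ultimately show ?thesis by blast
qed

lemma edge_decomp:
  assumes "simple_graph V E" "strict_linear_order_on V lt" "f \<in> E"
  shows "\<exists>p q. f = {p,q} \<and> lt p q \<and> p \<in> V \<and> q \<in> V \<and> lv lt f = p \<and> rv lt f = q"
proof -
  have "card f = 2" "f \<subseteq> V" using assms unfolding simple_graph_def by auto
  then obtain p q where f: "f = {p,q}" "p \<noteq> q" by (meson card_2_iff)
  have V: "p \<in> V" "q \<in> V" using f \<open>f \<subseteq> V\<close> by auto
  have "lt p q \<or> lt q p" using assms(2) V f(2) unfolding strict_linear_order_on_def by blast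
  then show ?thesis
  proof
    assume h: "lt p q"
    have "lv lt {p,q} = p \<and> rv lt {p,q} = q" using lv_rv_pair[OF assms(2) V h] .
    then show ?thesis using f V h by (intro exI[of _ p] exI[of _ q]) simp
  next
    assume h: "lt q p"
    have "lv lt {q,p} = q \<and> rv lt {q,p} = p" using lv_rv_pair[OF assms(2) V(2) V(1) h] .
    then show ?thesis using f V h by (intro exI[of _ q] exI[of _ p]) (simp add: insert_commute)
  qed
qed

lemma swap2:
  assumes "matching E M" "f1\<in>M" "f2\<in>M" "f1\<noteq>f2" "g1\<in>E" "g2\<in>E" "g1\<inter>g2={}" "g1\<union>g2 = f1\<union>f2"
  shows "matching E (insert g1 (insert g2 (M - {f1,f2}))) \<and>
         \<Union>(insert g1 (insert g2 (M - {f1,f2}))) = \<Union>M"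
proof -
  have d: "\<And>h. h \<in> M - {f1,f2} \<Longrightarrow> h \<inter> (f1 \<union> f2) = {}"
    using assms(1,2,3) unfolding matching_def by blast
  have m: "matching E (insert g1 (insert g2 (M - {f1,f2})))"
    unfolding matching_def
  proof (intro conjI ballI impI)
    show "insert g1 (insert g2 (M - {f1, f2})) \<subseteq> E" using assms unfolding matching_def by auto
  next
    fix h k assume h: "h \<in> insert g1 (insert g2 (M - {f1, f2}))" and k: "k \<in> insert g1 (insert g2 (M - {f1, f2}))" and hk: "h \<noteq> k"
    have g1s: "g1 \<subseteq> f1 \<union> f2" "g2 \<subseteq> f1 \<union> f2" using assms(8) by auto
    have dm: "\<And>h k. h \<in> M \<Longrightarrow> k \<in> M \<Longrightarrow> h \<noteq> k \<Longrightarrow> h \<inter> k = {}"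
      using assms(1) unfolding matching_def by blast
    have c1: "h \<inter> k = {}" if "h \<in> {g1,g2}" "k \<in> {g1,g2}"
      using that hk assms(7) by (auto simp: Int_commute)
    have c2: "h \<inter> k = {}" if "h \<in> {g1,g2}" "k \<in> M - {f1,f2}"
    proof -
      have "h \<subseteq> f1 \<union> f2" using that g1s by auto
      moreover have "k \<inter> (f1 \<union> f2) = {}" using d that by blast
      ultimately show ?thesis by blast
    qed
    have c3: "h \<inter> k = {}" if "k \<in> {g1,g2}" "h \<in> M - {f1,f2}"
    proof -
      have "k \<subseteq> f1 \<union> f2" using that g1s by auto
      moreover have "h \<inter> (f1 \<union> f2) = {}" using d that by blast
      ultimately show ?thesis by blast
    qed
    have c4: "h \<inter> k = {}" if "k \<in> M - {f1,f2}" "h \<in> M - {f1,f2}"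
      using dm that hk by blast
    show "h \<inter> k = {}"
    proof (cases "h \<in> {g1,g2}")
      case True
      then show ?thesis using c1 c2 k by blast
    next
      case False
      then have "h \<in> M - {f1,f2}" using h by blast
      then show ?thesis using c3 c4 k by blast
    qed
  qed
  have "\<Union>M = \<Union>(M - {f1,f2}) \<union> f1 \<union> f2" using assms(2,3) by blast
  then show ?thesis using m assms(8) by auto
qed

lemma repl1:
  assumes "matching E M'" "g1\<in>M'" "g2\<in>M'" "g1\<noteq>g2" "h\<in>E" "h \<subseteq> g1 \<union> g2"
  shows "matching E (insert h (M' - {g1,g2})) \<and>
         \<Union>(insert h (M' - {g1,g2})) = (\<Union>M' - (g1 \<union> g2)) \<union> h"
proof -
  have d: "\<And>k. k \<in> M' - {g1,g2} \<Longrightarrow> k \<inter> (g1 \<union> g2) = {}"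
    using assms(1,2,3) unfolding matching_def by blast
  have m: "matching E (insert h (M' - {g1,g2}))"
    using assms d unfolding matching_def by blast
  have "\<Union>(M' - {g1,g2}) = \<Union>M' - (g1 \<union> g2)"
    using d assms(2,3) by blast
  then show ?thesis using m by auto
qed

theorem corollary1:
  fixes V :: "'a set" and E :: "'a set set" and lt :: "'a \<Rightarrow> 'a \<Rightarrow> bool"
    and M :: "'a set set" and e e' :: "'a set"
  assumes "simple_graph V E"
    and "proper_interval_graph V E"
    and "proper_vertex_ordering V E lt"
    and "uniquely_restricted E M"
    and "e' \<in> E"
    and "starts_with lt M e'"
    and "e \<in> E"
    and "lt (rv lt e) (lv lt e')"
    and "uniquely_restricted E {e, e'}"
  shows "uniquely_restricted E (insert e M) \<and> starts_with lt (insert e M) e"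
proof -
  have slo: "strict_linear_order_on V lt" using assms(3) unfolding proper_vertex_ordering_def by blast
  have irr: "\<And>x. x \<in> V \<Longrightarrow> \<not> lt x x" using slo unfolding strict_linear_order_on_def by blast
  have tr: "\<And>x y z. x \<in> V \<Longrightarrow> y \<in> V \<Longrightarrow> z \<in> V \<Longrightarrow> lt x y \<Longrightarrow> lt y z \<Longrightarrow> lt x z"
    using slo unfolding strict_linear_order_on_def by blast
  have tot: "\<And>x y. x \<in> V \<Longrightarrow> y \<in> V \<Longrightarrow> x \<noteq> y \<Longrightarrow> lt x y \<or> lt y x"
    using slo unfolding strict_linear_order_on_def by blast
  have pr: "\<And>u v w. u \<in> V \<Longrightarrow> v \<in> V \<Longrightarrow> w \<in> V \<Longrightarrow> lt u v \<Longrightarrow> lt v w \<Longrightarrow> {u,w} \<in> E \<Longrightarrow> {u,v} \<in> E \<and> {v,w} \<in> E"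
    using assms(3) unfolding proper_vertex_ordering_def by blast
  have mM: "matching E M" using assms(4) unfolding uniquely_restricted_def by blast
  have urM: "\<And>M'. matching E M' \<Longrightarrow> \<Union>M' = \<Union>M \<Longrightarrow> M' = M"
    using assms(4) unfolding uniquely_restricted_def by blast
  have mEE: "matching E {e,e'}" using assms(9) unfolding uniquely_restricted_def by blast
  have urEE: "\<And>M'. matching E M' \<Longrightarrow> \<Union>M' = e \<union> e' \<Longrightarrow> M' = {e,e'}"
    using assms(9) unfolding uniquely_restricted_def by auto
  obtain a b where ab: "e = {a,b}" "lt a b" "a \<in> V" "b \<in> V" "lv lt e = a" "rv lt e = b"
    using edge_decomp[OF assms(1) slo assms(7)] by blast
  obtain c d where cd: "e' = {c,d}" "lt c d" "c \<in> V" "d \<in> V" "lv lt e' = c" "rv lt e' = d"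
    using edge_decomp[OF assms(1) slo assms(5)] by blast
  have bc: "lt b c" using assms(8) ab cd by simp
  have ac: "lt a c" using tr ab cd bc by blast
  have ad: "lt a d" using tr ab cd ac by blast
  have bd: "lt b d" using tr ab cd bc by blast
  have e'M: "e' \<in> M" using assms(6) unfolding starts_with_def by blast
  have MV: "\<And>v. v \<in> \<Union>M \<Longrightarrow> v \<in> V"
    using mM assms(1) unfolding matching_def simple_graph_def by blast
  have Mgt: "\<And>v. v \<in> \<Union>M \<Longrightarrow> v \<notin> e' \<Longrightarrow> lt c v"
  proof -
    fix v assume v: "v \<in> \<Union>M" "v \<notin> e'"
    then obtain f where f: "f \<in> M" "v \<in> f" by blast
    have fE: "f \<in> E" using f mM unfolding matching_def by blast
    obtain p q where pq: "f = {p,q}" "lt p q" "p \<in> V" "q \<in> V" "lv lt f = p" "rv lt f = q"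
      using edge_decomp[OF assms(1) slo fE] by blast
    have "f \<noteq> e'" using v f by blast
    then have "lt c p" using assms(6) f pq cd unfolding starts_with_def by auto
    then have "lt c q" using tr cd pq by blast
    then show "lt c v" using \<open>lt c p\<close> f pq by auto
  qed
  have Mge: "\<And>v. v \<in> \<Union>M \<Longrightarrow> v = c \<or> lt c v" using Mgt cd by blast
  have aM: "a \<notin> \<Union>M"
  proof
    assume a: "a \<in> \<Union>M"
    then have "a = c \<or> lt c a" using Mge by blast
    then show False
    proof
      assume "a = c" then show False using ac irr ab by simp
    next
      assume "lt c a" then have "lt a a" using tr[of a c a] ac ab cd by blast
      then show False using irr ab by blast
    qed
  qed
  have bM: "b \<notin> \<Union>M"
  proof
    assume a: "b \<in> \<Union>M"
    then have "b = c \<or> lt c b" using Mge by blast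
    then show False
    proof
      assume "b = c" then show False using bc irr ab by simp
    next
      assume "lt c b" then have "lt b b" using tr[of b c b] bc ab cd by blast
      then show False using irr ab by blast
    qed
  qed
  have sw: "starts_with lt (insert e M) e"
    unfolding starts_with_def
  proof (intro conjI ballI impI)
    show "e \<in> insert e M" by simp
  next
    fix f assume f: "f \<in> insert e M" "f \<noteq> e"
    then have fM: "f \<in> M" by simp
    show "lt (lv lt e) (lv lt f)"
    proof (cases "f = e'")
      case True then show ?thesis using ab cd ac by simp
    next
      case False
      then have "lt c (lv lt f)" using assms(6) fM cd unfolding starts_with_def by auto
      moreover have "lv lt f \<in> V"
      proof -
        have fE: "f \<in> E" using fM mM unfolding matching_def by blast
        show ?thesis using edge_decomp[OF assms(1) slo fE] by auto
      qed
      ultimately have "lt a (lv lt f)" using tr[of a c "lv lt f"] ab cd ac by blast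
      then show ?thesis using ab by simp
    qed
  qed
  have eM: "\<And>f. f \<in> M \<Longrightarrow> e \<inter> f = {}"
  proof -
    fix f assume "f \<in> M"
    then have "a \<notin> f" "b \<notin> f" using aM bM by blast+
    then show "e \<inter> f = {}" using ab by simp
  qed
  have mI: "matching E (insert e M)"
    using mM eM assms(7) unfolding matching_def by blast
  have ur: "\<And>M'. matching E M' \<Longrightarrow> \<Union>M' = \<Union>(insert e M) \<Longrightarrow> M' = insert e M"
  proof -
    fix M' assume mM': "matching E M'" and uM': "\<Union>M' = \<Union>(insert e M)"
    have M'E: "M' \<subseteq> E" using mM' unfolding matching_def by blast
    have disj: "\<And>g h. g \<in> M' \<Longrightarrow> h \<in> M' \<Longrightarrow> g \<noteq> h \<Longrightarrow> g \<inter> h = {}"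
      using mM' unfolding matching_def by blast
    have "a \<in> \<Union>M'" using uM' ab by auto
    then obtain g where g: "g \<in> M'" "a \<in> g" by blast
    obtain p q where pq: "g = {p,q}" "lt p q" "p \<in> V" "q \<in> V"
      using edge_decomp[OF assms(1) slo] g M'E by blast
    obtain x where x: "g = {a,x}" "x \<noteq> a" "x \<in> V"
      using pq g irr by (metis empty_iff insert_commute insert_iff)
    show "M' = insert e M"
    proof (cases "x = b")
      case True
      then have ge: "g = e" using x ab by simp
      have m0: "matching E (M' - {e})" using mM' unfolding matching_def by blast
      have "\<Union>(M' - {e}) = \<Union>M"
      proof
        show "\<Union>(M' - {e}) \<subseteq> \<Union>M"
        proof
          fix v assume "v \<in> \<Union>(M' - {e})"
          then obtain h where h: "h \<in> M'" "h \<noteq> e" "v \<in> h" by blast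
          then have "v \<notin> e" using disj g ge by blast
          moreover have "v \<in> \<Union>M'" using h by blast
          ultimately show "v \<in> \<Union>M" using uM' by auto
        qed
      next
        show "\<Union>M \<subseteq> \<Union>(M' - {e})"
        proof
          fix v assume v: "v \<in> \<Union>M"
          then have "v \<in> \<Union>M'" using uM' by auto
          then obtain h where h: "h \<in> M'" "v \<in> h" by blast
          have "v \<notin> e" using v aM bM ab by blast
          then show "v \<in> \<Union>(M' - {e})" using h by blast
        qed
      qed
      then have "M' - {e} = M" using urM m0 by blast
      then show ?thesis using g ge by blast
    next
      case False
      have xM: "x \<in> \<Union>M" using x g uM' False ab by blast
      have "b \<in> \<Union>M'" using uM' ab by auto
      then obtain g2 where g2: "g2 \<in> M'" "b \<in> g2" by blast
      have bg: "b \<notin> g" using x False ab irr by auto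
      have gg2: "g \<noteq> g2" using bg g2 by blast
      obtain p2 q2 where pq2: "g2 = {p2,q2}" "lt p2 q2" "p2 \<in> V" "q2 \<in> V"
        using edge_decomp[OF assms(1) slo] g2 M'E by blast
      obtain y where y: "g2 = {b,y}" "y \<noteq> b" "y \<in> V"
        using pq2 g2 irr by (metis empty_iff insert_commute insert_iff)
      have gi: "g \<inter> g2 = {}" using disj g g2 gg2 by blast
      have ya: "y \<noteq> a" using gi x y by blast
      have xy: "x \<noteq> y" using gi x y by blast
      have yM: "y \<in> \<Union>M" using y g2 uM' ya ab by blast
      have gE: "{a,x} \<in> E" using g x M'E by blast
      have g2E: "{b,y} \<in> E" using g2 y M'E by blast
      have xyE: "{x,y} \<in> E"
      proof (cases "lt x y")
        case True
        have "lt b x" using Mge[OF xM] bc tr ab cd x by blast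
        then show ?thesis using pr[of b x y] True ab x y g2E by blast
      next
        case False
        then have "lt y x" using tot x y xy by blast
        moreover have "lt a y" using Mge[OF yM] ac tr ab cd y by blast
        ultimately show ?thesis using pr[of a y x] ab x y gE by (simp add: insert_commute)
      qed
      have R: "matching E (insert {x,y} (M' - {g,g2})) \<and>
         \<Union>(insert {x,y} (M' - {g,g2})) = (\<Union>M' - (g \<union> g2)) \<union> {x,y}"
        using repl1[OF mM' g(1) g2(1) gg2 xyE] x y by auto
      have "\<Union>(insert {x,y} (M' - {g,g2})) = \<Union>M"
        using R uM' x y ab aM bM xM yM by auto
      then have "insert {x,y} (M' - {g,g2}) = M" using urM[OF conjunct1[OF R]] by blast
      then have xyM: "{x,y} \<in> M" by blast
      have acE: "{a,c} \<in> E"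
      proof (cases "x = c")
        case True then show ?thesis using gE by simp
      next
        case False
        then have "lt c x" using Mge[OF xM] by blast
        then show ?thesis using pr[of a c x] ac ab cd x gE by blast
      qed
      have bcE: "{b,c} \<in> E"
      proof (cases "y = c")
        case True then show ?thesis using g2E by simp
      next
        case False
        then have "lt c y" using Mge[OF yM] by blast
        then show ?thesis using pr[of b c y] bc ab cd y g2E by blast
      qed
      have neq: "a \<noteq> b" "a \<noteq> c" "a \<noteq> d" "b \<noteq> c" "b \<noteq> d" "c \<noteq> d"
        using ab cd ac ad bc bd irr by auto
      have noEE: "\<And>h1 h2. h1 \<in> E \<Longrightarrow> h2 \<in> E \<Longrightarrow> h1 \<inter> h2 = {} \<Longrightarrow> h1 \<union> h2 = e \<union> e'
                   \<Longrightarrow> h1 \<noteq> e \<Longrightarrow> h1 \<noteq> e' \<Longrightarrow> False"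
      proof -
        fix h1 h2 assume h: "h1 \<in> E" "h2 \<in> E" "h1 \<inter> h2 = {}" "h1 \<union> h2 = e \<union> e'" "h1 \<noteq> e" "h1 \<noteq> e'"
        have ee': "e \<noteq> e'" using ab cd neq by (auto simp: doubleton_eq_iff)
        have S: "matching E (insert h1 (insert h2 ({e,e'} - {e,e'}))) \<and>
          \<Union>(insert h1 (insert h2 ({e,e'} - {e,e'}))) = \<Union>{e,e'}"
          using swap2[OF mEE _ _ ee' h(1-4)] by simp
        then have "insert h1 (insert h2 ({e,e'} - {e,e'})) = {e,e'}"
          using urEE[OF conjunct1[OF S]] by simp
        then show False using h(5,6) by blast
      qed
      show ?thesis
      proof (cases "{x,y} = e'")
        case True
        show ?thesis
          using noEE[OF gE g2E] gi x y True ab cd neq False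
          by (auto simp: doubleton_eq_iff)
      next
        case False
        have mdis: "\<forall>f1\<in>M. \<forall>f2\<in>M. f1 \<noteq> f2 \<longrightarrow> f1 \<inter> f2 = {}" using mM unfolding matching_def by blast
        have "{x,y} \<inter> e' = {}" using mdis[rule_format, OF xyM e'M False] .
        then have xn: "x \<notin> e'" and yn: "y \<notin> e'" by auto
        have cx: "lt c x" using Mgt xM xn by blast
        have cy: "lt c y" using Mgt yM yn by blast
        show ?thesis
        proof (cases "lt d x")
          case True
          have "{a,d} \<in> E" using pr[of a d x] ad ab cd x gE True by blast
          then show ?thesis
            using noEE[of "{a,d}" "{b,c}"] bcE neq ab cd by (auto simp: doubleton_eq_iff)
        next
          case dx: False
          show ?thesis
          proof (cases "lt d y")
            case True
            have "{b,d} \<in> E" using pr[of b d y] bd ab cd y g2E True by blast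
            then show ?thesis
              using noEE[of "{a,c}" "{b,d}"] acE neq ab cd by (auto simp: doubleton_eq_iff)
          next
            case dy: False
            have xd: "lt x d" using tot[of x d] dx xn cd x by auto
            have yd: "lt y d" using tot[of y d] dy yn cd y by auto
            have cdE: "{c,d} \<in> E" using assms(5) cd by simp
            have cxE: "{c,x} \<in> E" using pr[of c x d] cx xd cd x cdE by blast
            have ydE: "{y,d} \<in> E" using pr[of c y d] cy yd cd y cdE by blast
            have ne: "e' \<noteq> {x,y}" using False by auto
            have S: "matching E (insert {c,x} (insert {y,d} (M - {e',{x,y}}))) \<and>
               \<Union>(insert {c,x} (insert {y,d} (M - {e',{x,y}}))) = \<Union>M"
            proof (rule swap2[OF mM e'M xyM ne cxE ydE])
              have "x \<noteq> d" "x \<noteq> c" "y \<noteq> c" using xn yn cd by auto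
              then show "{c, x} \<inter> {y, d} = {}" using xy neq by auto
              show "{c, x} \<union> {y, d} = e' \<union> {x, y}" using cd by auto
            qed
            then have "insert {c,x} (insert {y,d} (M - {e',{x,y}})) = M" using urM[OF conjunct1[OF S] conjunct2[OF S]] by blast
            then have "{c,x} \<in> M" by blast
            moreover have "{c,x} \<noteq> e'" using cd xn by auto
            moreover have "c \<in> {c,x} \<inter> e'" using cd by simp
            ultimately show ?thesis using mdis[rule_format, OF \<open>{c,x} \<in> M\<close> e'M] by blast
          qed
        qed
      qed
    qed
  qed
  show ?thesis using mI ur sw unfolding uniquely_restricted_def by blast
qed

end
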